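(* Let $G$ be a group, $\{W_n\}$ a $C$-filling sequence of finite subsets of $G$, and $E\subseteq G$ finite. Suppose that for each $f\in E$ there is an index $n(f)$ such that $\frac{1}{|W_{n(f)}|}|W_{n(f)}f\cap E|\le\alpha$. Then \[ \frac{|E|}{|\bigcup_{f\in E}W_{n(f)}f|}\le\frac{\alpha}{C}. \]
   Context: A sequence $\{W_{n(i)}f_i\}_{i=1}^I$ of right translates is incremental if $n(1)\ge\dots\ge n(I)$ and $f_i\notin\bigcup_{j<i}W_{n(j)}f_j$ for each $i$. A sequence $\{W_n\}$ of finite subsets with $1_G\in W_n$ for all $n$ is $C$-filling if for every incremental sequence $|\bigcup_iW_{n(i)}f_i|\ge C\sum_i|W_{n(i)}f_i|$. *)

theory Defs
  imports Complex_Main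
begin

text \<open>Groups are rendered via the type class group_add (not necessarily commutative);
  the group operation is written +, the identity 1_G is 0.\<close>

definition rtrans :: "'a::group_add set \<Rightarrow> 'a \<Rightarrow> 'a set" where
  "rtrans W f = (\<lambda>w. w + f) ` W"

definition incremental :: "(nat \<Rightarrow> 'a::group_add set) \<Rightarrow> nat \<Rightarrow> (nat \<Rightarrow> nat) \<Rightarrow> (nat \<Rightarrow> 'a) \<Rightarrow> bool" where
  "incremental W I nidx fidx \<longleftrightarrow>
     (\<forall>i j. i \<le> j \<longrightarrow> j < I \<longrightarrow> nidx j \<le> nidx i) \<and>
     (\<forall>i < I. fidx i \<notin> (\<Union>j<i. rtrans (W (nidx j)) (fidx j)))"

definition C_filling :: "(nat \<Rightarrow> 'a::group_add set) \<Rightarrow> real \<Rightarrow> bool" where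
  "C_filling W C \<longleftrightarrow>
     (\<forall>n. finite (W n) \<and> 0 \<in> W n) \<and>
     (\<forall>I nidx fidx. incremental W I nidx fidx \<longrightarrow>
        real (card (\<Union>i<I. rtrans (W (nidx i)) (fidx i)))
          \<ge> C * (\<Sum>i<I. real (card (rtrans (W (nidx i)) (fidx i)))))"

end

theory Submission
  imports Defs
begin

lemma greedy_seq:
  fixes W :: "nat \<Rightarrow> 'a::group_add set" and n :: "'a \<Rightarrow> nat"
  assumes W0: "\<forall>m. 0 \<in> W m"
  shows "sorted_wrt (\<lambda>a b. n b \<le> n a) xs \<Longrightarrow>
    \<exists>I nidx fidx. incremental W I nidx fidx \<and> (\<forall>i<I. fidx i \<in> set xs \<and> nidx i = n (fidx i))
      \<and> set xs \<subseteq> (\<Union>i<I. rtrans (W (nidx i)) (fidx i))"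
proof (induction xs rule: rev_induct)
  case Nil
  show ?case by (rule exI[of _ 0], auto simp: incremental_def)
next
  case (snoc x xs)
  have s: "sorted_wrt (\<lambda>a b. n b \<le> n a) xs" and le: "\<forall>y\<in>set xs. n x \<le> n y"
    using snoc.prems by (auto simp: sorted_wrt_append)
  obtain I nidx fidx where inc: "incremental W I nidx fidx"
    and P: "\<forall>i<I. fidx i \<in> set xs \<and> nidx i = n (fidx i)"
    and cov: "set xs \<subseteq> (\<Union>i<I. rtrans (W (nidx i)) (fidx i))"
    using snoc.IH[OF s] by blast
  show ?case
  proof (cases "x \<in> (\<Union>i<I. rtrans (W (nidx i)) (fidx i))")
    case True
    then show ?thesis using inc P cov by (intro exI[of _ I] exI[of _ nidx] exI[of _ fidx]) auto
  next
    case False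
    define nidx' where "nidx' = nidx(I := n x)"
    define fidx' where "fidx' = fidx(I := x)"
    have inc': "incremental W (Suc I) nidx' fidx'"
      unfolding incremental_def
    proof (intro conjI allI impI)
      fix i j assume "i \<le> j" "j < Suc I"
      then show "nidx' j \<le> nidx' i" using inc P le unfolding incremental_def nidx'_def
        by (cases "j = I"; cases "i = I") auto
    next
      fix i assume i: "i < Suc I"
      show "fidx' i \<notin> (\<Union>j<i. rtrans (W (nidx' j)) (fidx' j))"
      proof (cases "i = I")
        case True
        then show ?thesis using False by (simp add: nidx'_def fidx'_def)
      next
        case False
        then have "i < I" using i by simp
        then show ?thesis using inc unfolding incremental_def nidx'_def fidx'_def by auto
      qed
    qed
    have "x \<in> rtrans (W (nidx' I)) (fidx' I)"
      using W0 by (auto simp: rtrans_def nidx'_def fidx'_def image_iff intro: bexI[of _ 0])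
    moreover have "(\<Union>i<I. rtrans (W (nidx i)) (fidx i)) \<subseteq> (\<Union>i<Suc I. rtrans (W (nidx' i)) (fidx' i))"
    proof
      fix y assume "y \<in> (\<Union>i<I. rtrans (W (nidx i)) (fidx i))"
      then obtain i where "i < I" "y \<in> rtrans (W (nidx i)) (fidx i)" by blast
      then show "y \<in> (\<Union>i<Suc I. rtrans (W (nidx' i)) (fidx' i))"
        by (intro UN_I[of i]) (auto simp: nidx'_def fidx'_def)
    qed
    ultimately have "set (xs @ [x]) \<subseteq> (\<Union>i<Suc I. rtrans (W (nidx' i)) (fidx' i))"
      using cov by auto
    moreover have "\<forall>i<Suc I. fidx' i \<in> set (xs @ [x]) \<and> nidx' i = n (fidx' i)"
      using P by (auto simp: nidx'_def fidx'_def less_Suc_eq)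
    ultimately show ?thesis using inc' by blast
  qed
qed

lemma card_rtrans: "card (rtrans W f) = card W"
  unfolding rtrans_def by (rule card_image) (auto simp: inj_on_def)

theorem lemma3p1:
  fixes W :: "nat \<Rightarrow> 'a::group_add set" and C \<alpha> :: real
    and E :: "'a set" and n :: "'a \<Rightarrow> nat"
  assumes "C_filling W C" and "0 < C"
    and "finite E" and "E \<noteq> {}"
    and "\<forall>f\<in>E. real (card (rtrans (W (n f)) f \<inter> E)) / real (card (W (n f))) \<le> \<alpha>"
  shows "real (card E) / real (card (\<Union>f\<in>E. rtrans (W (n f)) f)) \<le> \<alpha> / C"
proof -
  have Wf: "\<And>m. finite (W m)" and W0: "\<forall>m. 0 \<in> W m" using assms(1) by (auto simp: C_filling_def)
  have filling: "\<And>I nidx fidx. incremental W I nidx fidx \<Longrightarrow>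
        C * (\<Sum>i<I. real (card (rtrans (W (nidx i)) (fidx i)))) \<le> real (card (\<Union>i<I. rtrans (W (nidx i)) (fidx i)))"
    using assms(1) by (auto simp: C_filling_def)
  obtain ys where ys: "set ys = E" using finite_list[OF assms(3)] by blast
  define xs where "xs = rev (sort_key n ys)"
  have "sorted (map n (sort_key n ys))" by (rule sorted_sort_key)
  then have "sorted_wrt (\<lambda>a b. n b \<le> n a) xs"
    by (simp add: xs_def sorted_wrt_rev sorted_map)
  moreover have sx: "set xs = E" using ys by (simp add: xs_def)
  ultimately obtain I nidx fidx where inc: "incremental W I nidx fidx"
    and P: "\<forall>i<I. fidx i \<in> E \<and> nidx i = n (fidx i)"
    and cov: "E \<subseteq> (\<Union>i<I. rtrans (W (nidx i)) (fidx i))"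
    using greedy_seq[OF W0, of n xs] by auto
  define U' where "U' = (\<Union>i<I. rtrans (W (nidx i)) (fidx i))"
  define U where "U = (\<Union>f\<in>E. rtrans (W (n f)) f)"
  have finU: "finite U" unfolding U_def using assms(3) Wf by (auto simp: rtrans_def)
  have U'U: "U' \<subseteq> U" unfolding U'_def U_def using P by auto
  obtain f0 where f0: "f0 \<in> E" using assms(4) by blast
  have a0: "0 \<le> \<alpha>" using assms(5) f0 by (meson divide_nonneg_nonneg of_nat_0_le_iff order_trans)
  have cardpos: "\<And>m. 0 < card (W m)" using Wf W0 by (metis card_gt_0_iff empty_iff)
  have "E = (\<Union>i<I. rtrans (W (nidx i)) (fidx i) \<inter> E)" using cov by auto
  then have "card E \<le> (\<Sum>i<I. card (rtrans (W (nidx i)) (fidx i) \<inter> E))"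
    by (metis card_UN_le finite_lessThan)
  then have "real (card E) \<le> (\<Sum>i<I. real (card (rtrans (W (nidx i)) (fidx i) \<inter> E)))"
    by (metis of_nat_le_iff of_nat_sum)
  also have "\<dots> \<le> (\<Sum>i<I. \<alpha> * real (card (rtrans (W (nidx i)) (fidx i))))"
  proof (rule sum_mono)
    fix i assume "i \<in> {..<I}"
    then have "fidx i \<in> E" "nidx i = n (fidx i)" using P by auto
    then have "real (card (rtrans (W (nidx i)) (fidx i) \<inter> E)) / real (card (W (nidx i))) \<le> \<alpha>"
      using assms(5) by auto
    then show "real (card (rtrans (W (nidx i)) (fidx i) \<inter> E)) \<le> \<alpha> * real (card (rtrans (W (nidx i)) (fidx i)))"
      using cardpos[of "nidx i"] by (simp add: card_rtrans pos_divide_le_eq mult.commute)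
  qed
  also have "\<dots> = \<alpha> * (\<Sum>i<I. real (card (rtrans (W (nidx i)) (fidx i))))"
    by (simp add: sum_distrib_left)
  also have "\<dots> \<le> \<alpha> * (real (card U') / C)"
    using filling[OF inc] assms(2) a0 unfolding U'_def
    by (intro mult_left_mono) (auto simp: pos_le_divide_eq mult.commute)
  also have "\<dots> \<le> \<alpha> * (real (card U) / C)"
    using card_mono[OF finU U'U] assms(2) a0
    by (intro mult_left_mono divide_right_mono) auto
  finally have main: "real (card E) \<le> \<alpha> / C * real (card U)" by simp
  have "E \<subseteq> U" using cov U'U unfolding U'_def by auto
  then have "0 < card U" using finU assms(4) by (metis card_gt_0_iff subset_empty)
  then show ?thesis using main unfolding U_def[symmetric] by (simp add: divide_le_eq)
qed

end
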